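(* Let $d\ge 2$ and let $0\le p<q<p_c$. Then for each $\boldsymbol{x}\in\mathbb{R}^d$, \[ \mu_p(\boldsymbol{x})-\mu_q(\boldsymbol{x})\ \ge\ \frac{\mu_q(\boldsymbol{x})}{1-q}\,(q-p). \]
   Context: Bernoulli first-passage percolation on the hypercubic lattice $\mathbb{L}^d=(\mathbb{Z}^d,\mathbb{E}^d)$, $d\ge2$: the passage times $\{t(e)\}_{e\in\mathbb{E}^d}$ are independent with $P_p(t(e)=0)=p$ and $P_p(t(e)=1)=1-p$; $E_p$ denotes expectation under $P_p$. For a self-avoiding lattice path $\gamma$, $t(\gamma)=\sum_{e\in\gamma}t(e)$. For $\boldsymbol{x}\in\mathbb{R}^d$ let $\boldsymbol{x}'$ be the unique point of $\mathbb{Z}^d$ with $\boldsymbol{x}\in\boldsymbol{x}'+[0,1)^d$, and define the first-passage time $T(\boldsymbol{x},\boldsymbol{y})=\inf_{\gamma:\boldsymbol{x}'\to\boldsymbol{y}'}t(\gamma)$ (infimum over self-avoiding paths from $\boldsymbol{x}'$ to $\boldsymbol{y}'$). With $\boldsymbol{O}$ the origin, the time constant is $\mu_p(\boldsymbol{x})=\lim_{n\to\infty}E_p[T(\boldsymbol{O},n\boldsymbol{x})]/n=\inf_{n\ge1}E_p[T(\boldsymbol{O},n\boldsymbol{x})]/n$ for $\boldsymbol{x}\in\mathbb{Z}^d$, extended (as is known) to a seminorm on $\mathbb{R}^d$. $p_c=p_c(d)$ is the infimum of those $p\in[0,1]$ for which there exists (a.s.) an infinite self-avoiding path of edges $e$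 with $t(e)=0$, i.e. the critical probability of bond percolation on $\mathbb{Z}^d$. *)

theory Defs
  imports "HOL-Probability.Probability"
begin

text \<open>Hypercubic lattice Z^d, d = CARD('n). Vertices are integer vectors.\<close>

type_synonym 'n vertex = "int ^ 'n"
type_synonym 'n edge = "'n vertex set"
type_synonym 'n config = "'n edge \<Rightarrow> bool"
  \<comment> \<open>omega e = True means t(e) = 0, omega e = False means t(e) = 1\<close>

definition adj :: "'n::finite vertex \<Rightarrow> 'n vertex \<Rightarrow> bool" where
  "adj u v \<longleftrightarrow> (\<Sum>i\<in>UNIV. \<bar>u $ i - v $ i\<bar>) = 1"

definition lattice_edges :: "'n::finite edge set" where
  "lattice_edges = {{u, v} | u v. adj u v}"

definition FPP :: "real \<Rightarrow> ('n::finite) config measure" where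
  "FPP p = PiM lattice_edges (\<lambda>_. measure_pmf (bernoulli_pmf p))"

definition tval :: "'n::finite config \<Rightarrow> 'n edge \<Rightarrow> real" where
  "tval \<omega> e = (if \<omega> e then 0 else 1)"

definition saw_path :: "'n::finite vertex \<Rightarrow> 'n vertex \<Rightarrow> 'n vertex list \<Rightarrow> bool" where
  "saw_path u v vs \<longleftrightarrow> vs \<noteq> [] \<and> hd vs = u \<and> last vs = v \<and> distinct vs \<and>
     (\<forall>i < length vs - 1. adj (vs ! i) (vs ! (i + 1)))"

definition path_time :: "'n::finite config \<Rightarrow> 'n vertex list \<Rightarrow> real" where
  "path_time \<omega> vs = (\<Sum>i < length vs - 1. tval \<omega> {vs ! i, vs ! (i + 1)})"

definition lat :: "real ^ 'n::finite \<Rightarrow> 'n vertex" where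
  "lat x = (\<chi> i. \<lfloor>x $ i\<rfloor>)"

definition passage_time :: "'n::finite config \<Rightarrow> real ^ 'n \<Rightarrow> real ^ 'n \<Rightarrow> real" where
  "passage_time \<omega> x y = Inf (path_time \<omega> ` {vs. saw_path (lat x) (lat y) vs})"

definition time_const :: "real \<Rightarrow> real ^ 'n::finite \<Rightarrow> real" where
  "time_const p x =
     lim (\<lambda>n::nat. (\<integral>\<omega>. passage_time \<omega> 0 (real n *\<^sub>R x) \<partial>(FPP p :: 'n config measure)) / real n)"

definition percolates :: "'n::finite config \<Rightarrow> bool" where
  "percolates \<omega> \<longleftrightarrow> (\<exists>f :: nat \<Rightarrow> 'n vertex. inj f \<and>
      (\<forall>k. adj (f k) (f (Suc k)) \<and> \<omega> {f k, f (Suc k)}))"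

definition p_crit :: "'n::finite itself \<Rightarrow> real" where
  "p_crit _ = Inf {p \<in> {0..1}. AE \<omega> in (FPP p :: 'n config measure). percolates \<omega>}"

end

theory Submission
  imports Defs
begin


fun walkp :: "'n::finite vertex list \<Rightarrow> bool" where
  "walkp [] = False"
| "walkp [a] = True"
| "walkp (a # b # r) = (adj a b \<and> walkp (b # r))"

fun ptime :: "'n::finite config \<Rightarrow> 'n vertex list \<Rightarrow> real" where
  "ptime \<omega> (a # b # r) = tval \<omega> {a, b} + ptime \<omega> (b # r)"
| "ptime \<omega> _ = 0"

definition saw :: "'n::finite vertex \<Rightarrow> 'n vertex \<Rightarrow> 'n vertex list \<Rightarrow> bool" where
  "saw u v vs \<longleftrightarrow> vs \<noteq> [] \<and> hd vs = u \<and> last vs = v \<and> distinct vs \<and> walkp vs"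

definition Tv :: "'n::finite config \<Rightarrow> 'n vertex \<Rightarrow> 'n vertex \<Rightarrow> real" where
  "Tv \<omega> u v = Inf (ptime \<omega> ` {vs. saw u v vs})"

lemma path_time_eq: "path_time \<omega> vs = ptime \<omega> vs"
proof (induction \<omega> vs rule: ptime.induct)
  case (1 \<omega> a b r)
  have "path_time \<omega> (a # b # r) = tval \<omega> {a, b} + path_time \<omega> (b # r)"
    unfolding path_time_def by (simp add: sum.lessThan_Suc_shift del: sum.lessThan_Suc)
  then show ?case using 1 by simp
qed (auto simp: path_time_def)

lemma walk_nth_iff: "vs \<noteq> [] \<Longrightarrow> (\<forall>i < length vs - 1. adj (vs ! i) (vs ! (i + 1))) \<longleftrightarrow> walkp vs"
proof (induction vs rule: walkp.induct)
  case (3 a b r)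
  have "(\<forall>i < length (a # b # r) - 1. adj ((a # b # r) ! i) ((a # b # r) ! (i + 1))) \<longleftrightarrow>
        adj a b \<and> (\<forall>i < length (b # r) - 1. adj ((b # r) ! i) ((b # r) ! (i + 1)))"
    by (auto simp: less_Suc_eq_0_disj)
  then show ?case using 3 by simp
qed auto

lemma saw_path_iff: "saw_path u v vs \<longleftrightarrow> saw u v vs"
  unfolding saw_path_def saw_def using walk_nth_iff by blast

lemma passage_time_Tv: "passage_time \<omega> x y = Tv \<omega> (lat x) (lat y)"
  unfolding passage_time_def Tv_def saw_path_iff path_time_eq by simp

lemma tval_nonneg: "0 \<le> tval \<omega> e" and tval_le1: "tval \<omega> e \<le> 1"
  by (auto simp: tval_def)

lemma ptime_nonneg: "0 \<le> ptime \<omega> vs"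
  by (induction \<omega> vs rule: ptime.induct) (auto simp: tval_def)

lemma ptime_nat: "\<exists>n::nat. ptime \<omega> vs = real n"
proof (induction \<omega> vs rule: ptime.induct)
  case (1 \<omega> a b r)
  then obtain n where "ptime \<omega> (b # r) = real n" by blast
  then show ?case by (auto simp: tval_def intro: exI[of _ "Suc n"] exI[of _ n])
qed auto

lemma ptime_le_len: "ptime \<omega> vs \<le> real (length vs - 1)"
proof (induction \<omega> vs rule: ptime.induct)
  case (1 \<omega> a b r)
  then show ?case using tval_le1[of \<omega> "{a,b}"] by simp
qed auto

lemma ptime_append: "ptime \<omega> (xs @ y # ys) = ptime \<omega> (xs @ [y]) + ptime \<omega> (y # ys)"
proof (induction xs)
  case (Cons a xs)
  then show ?case by (cases xs) auto
qed simp

lemma walkp_append: "walkp (xs @ [y]) \<Longrightarrow> walkp (y # ys) \<Longrightarrow> walkp (xs @ y # ys)"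
proof (induction xs)
  case (Cons a xs)
  then show ?case by (cases xs) auto
qed simp

lemma walkp_appendD: "walkp (xs @ y # ys) \<Longrightarrow> walkp (y # ys)"
proof (induction xs)
  case (Cons a xs)
  then show ?case by (cases xs) auto
qed simp

lemma walkp_ne: "walkp vs \<Longrightarrow> vs \<noteq> []" by auto

lemma loop_erase:
  assumes "walkp vs"
  shows "\<exists>ws. walkp ws \<and> distinct ws \<and> hd ws = hd vs \<and> last ws = last vs \<and> ptime \<omega> ws \<le> ptime \<omega> vs"
  using assms
proof (induction vs)
  case Nil then show ?case by simp
next
  case (Cons a rest)
  show ?case
  proof (cases rest)
    case Nil then show ?thesis using Cons by (intro exI[of _ "[a]"]) auto
  next
    case (Cons b r)
    have wr: "walkp rest" and ab: "adj a (hd rest)"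
      using Cons.prems \<open>rest = b # r\<close> by auto
    obtain ws' where ws': "walkp ws'" "distinct ws'" "hd ws' = hd rest" "last ws' = last rest"
      "ptime \<omega> ws' \<le> ptime \<omega> rest" using Cons.IH[OF wr] by blast
    have pr: "ptime \<omega> (a # rest) = tval \<omega> {a, hd rest} + ptime \<omega> rest"
      using \<open>rest = b # r\<close> by simp
    show ?thesis
    proof (cases "a \<in> set ws'")
      case True
      then obtain xs ys where sp: "ws' = xs @ a # ys" by (meson split_list)
      have "walkp (a # ys)" using ws'(1) sp walkp_appendD by metis
      moreover have "distinct (a # ys)" using ws'(2) sp by simp
      moreover have "last (a # ys) = last (a # rest)"
        using ws'(4) sp \<open>rest = b # r\<close> by (cases ys) auto
      moreover have "ptime \<omega> (a # ys) \<le> ptime \<omega> (a # rest)"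
      proof -
        have "ptime \<omega> (a # ys) \<le> ptime \<omega> ws'"
          using sp ptime_append[of \<omega> xs a ys] ptime_nonneg[of \<omega> "xs @ [a]"] by simp
        also have "\<dots> \<le> ptime \<omega> (a # rest)" using ws'(5) pr tval_nonneg[of \<omega> "{a, hd rest}"] by simp
        finally show ?thesis .
      qed
      ultimately show ?thesis by (intro exI[of _ "a # ys"]) simp
    next
      case False
      obtain c s where cs: "ws' = c # s" using ws'(1) by (cases ws') auto
      have "walkp (a # ws')" using cs ws' ab by simp
      moreover have "distinct (a # ws')" using ws'(2) False by simp
      moreover have "last (a # ws') = last (a # rest)" using ws'(4) cs \<open>rest = b # r\<close> by simp
      moreover have "ptime \<omega> (a # ws') \<le> ptime \<omega> (a # rest)"
        using cs ws'(3,5) pr by simp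
      ultimately show ?thesis by (intro exI[of _ "a # ws'"]) simp
    qed
  qed
qed

definition dist1 :: "'n::finite vertex \<Rightarrow> 'n vertex \<Rightarrow> int" where
  "dist1 u v = (\<Sum>i\<in>UNIV. \<bar>u $ i - v $ i\<bar>)"

lemma dist1_nonneg: "0 \<le> dist1 u v" unfolding dist1_def by (simp add: sum_nonneg)

lemma dist1_zero: "dist1 u v = 0 \<Longrightarrow> u = v"
  unfolding dist1_def by (subst (asm) sum_nonneg_eq_0_iff) (auto simp: vec_eq_iff)

lemma straight_walk:
  "\<exists>vs. walkp vs \<and> hd vs = u \<and> last vs = v \<and> length vs = nat (dist1 u v) + 1"
proof (induction "nat (dist1 u v)" arbitrary: u)
  case 0
  then have "u = v" using dist1_zero dist1_nonneg[of u v] by fastforce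
  then show ?case by (intro exI[of _ "[u]"]) (simp add: dist1_def)
next
  case (Suc n)
  then have "u \<noteq> v" by (auto simp: dist1_def)
  then obtain i where i: "u $ i \<noteq> v $ i" by (auto simp: vec_eq_iff)
  define s where "s = sgn (v $ i - u $ i)"
  define w where "w = (\<chi> j. if j = i then u $ i + s else u $ j)"
  have uw: "\<bar>u $ j - w $ j\<bar> = (if j = i then 1 else 0)" for j
    using i by (auto simp: w_def s_def sgn_if)
  have wv: "\<bar>w $ j - v $ j\<bar> = \<bar>u $ j - v $ j\<bar> - (if j = i then 1 else 0)" for j
    using i by (auto simp: w_def s_def sgn_if)
  have "adj u w" unfolding adj_def uw by simp
  have "dist1 w v = dist1 u v - 1"
    unfolding dist1_def wv by (simp add: sum_subtractf)
  then have "n = nat (dist1 w v)" using Suc.hyps(2) by simp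
  from Suc.hyps(1)[OF this] obtain vs where vs: "walkp vs" "hd vs = w" "last vs = v"
    "length vs = nat (dist1 w v) + 1" by blast
  obtain c r where cr: "vs = c # r" using vs(1) by (cases vs) auto
  show ?case
    using vs cr \<open>adj u w\<close> \<open>n = nat (dist1 w v)\<close> Suc.hyps(2)
    by (intro exI[of _ "u # vs"]) auto
qed

lemma exists_saw_le:
  "\<exists>vs. saw u v vs \<and> ptime \<omega> vs \<le> real_of_int (dist1 u v)"
proof -
  obtain vs where vs: "walkp vs" "hd vs = u" "last vs = v" "length vs = nat (dist1 u v) + 1"
    using straight_walk by blast
  obtain ws where ws: "walkp ws" "distinct ws" "hd ws = u" "last ws = v" "ptime \<omega> ws \<le> ptime \<omega> vs"
    using loop_erase[OF vs(1), of \<omega>] vs by blast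
  have "ptime \<omega> vs \<le> real_of_int (dist1 u v)"
    using ptime_le_len[of \<omega> vs] vs(4) dist1_nonneg[of u v] by simp
  then show ?thesis using ws by (intro exI[of _ ws]) (auto simp: saw_def)
qed

lemma Tv_bdd: "bdd_below (ptime \<omega> ` {vs. saw u v vs})"
  using ptime_nonneg by (intro bdd_belowI[of _ 0]) auto

lemma Tv_lower: "saw u v vs \<Longrightarrow> Tv \<omega> u v \<le> ptime \<omega> vs"
  unfolding Tv_def by (rule cInf_lower) (auto intro: Tv_bdd)

lemma Tv_le_dist1: "Tv \<omega> u v \<le> real_of_int (dist1 u v)"
proof -
  obtain vs where "saw u v vs" "ptime \<omega> vs \<le> real_of_int (dist1 u v)" using exists_saw_le by blast
  then show ?thesis using Tv_lower[of u v vs \<omega>] by linarith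
qed

lemma Tv_attained: "\<exists>vs. saw u v vs \<and> Tv \<omega> u v = ptime \<omega> vs"
proof -
  define N where "N = {n::nat. \<exists>vs. saw u v vs \<and> ptime \<omega> vs = real n}"
  obtain vs0 where "saw u v vs0" using exists_saw_le by blast
  then obtain n0 where "n0 \<in> N" using ptime_nat unfolding N_def by blast
  define m where "m = (LEAST n. n \<in> N)"
  have mN: "m \<in> N" unfolding m_def using \<open>n0 \<in> N\<close> by (rule LeastI)
  then obtain vs where vs: "saw u v vs" "ptime \<omega> vs = real m" unfolding N_def by blast
  have "Inf (ptime \<omega> ` {vs. saw u v vs}) = real m"
  proof (rule cInf_eq_minimum)
    show "real m \<in> ptime \<omega> ` {vs. saw u v vs}" using vs by (metis image_eqI mem_Collect_eq)
    fix x assume "x \<in> ptime \<omega> ` {vs. saw u v vs}"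
    then obtain ws where ws: "saw u v ws" "x = ptime \<omega> ws" by blast
    obtain k where k: "ptime \<omega> ws = real k" using ptime_nat by blast
    then have "k \<in> N" using ws unfolding N_def by blast
    then have "m \<le> k" unfolding m_def by (rule Least_le)
    then show "real m \<le> x" using ws k by simp
  qed
  then show ?thesis using vs unfolding Tv_def by auto
qed

lemma Tv_nonneg: "0 \<le> Tv \<omega> u v"
  using Tv_attained[of u v \<omega>] ptime_nonneg by metis

lemma walk_concat:
  assumes "walkp xs" "walkp ys" "last xs = hd ys"
  shows "walkp (xs @ tl ys) \<and> hd (xs @ tl ys) = hd xs \<and> last (xs @ tl ys) = last ys \<and>
    ptime \<omega> (xs @ tl ys) = ptime \<omega> xs + ptime \<omega> ys"
proof -
  obtain y ys' where ys: "ys = y # ys'" using assms(2) by (cases ys) auto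
  have y: "last xs = y" using ys assms(3) by simp
  obtain xs0 where xs0: "xs = xs0 @ [y]" using assms(1) y
    by (metis append_butlast_last_id walkp_ne)
  have eq: "xs @ tl ys = xs0 @ y # ys'" using xs0 ys by simp
  have w: "walkp (xs0 @ y # ys')" using walkp_append[of xs0 y ys'] assms(1,2) xs0 ys by simp
  have h: "hd (xs0 @ y # ys') = hd xs" using xs0 by (cases xs0) auto
  have l: "last (xs0 @ y # ys') = last ys" using ys by simp
  have p: "ptime \<omega> (xs0 @ y # ys') = ptime \<omega> xs + ptime \<omega> ys"
    using ptime_append[of \<omega> xs0 y ys'] xs0 ys by simp
  show ?thesis using eq w h l p by simp
qed

lemma Tv_triangle: "Tv \<omega> u w \<le> Tv \<omega> u v + Tv \<omega> v w"
proof -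
  obtain xs where xs: "saw u v xs" "Tv \<omega> u v = ptime \<omega> xs" using Tv_attained by blast
  obtain ys where ys: "saw v w ys" "Tv \<omega> v w = ptime \<omega> ys" using Tv_attained by blast
  have c: "walkp (xs @ tl ys) \<and> hd (xs @ tl ys) = u \<and> last (xs @ tl ys) = w \<and>
    ptime \<omega> (xs @ tl ys) = ptime \<omega> xs + ptime \<omega> ys"
    using walk_concat[of xs ys \<omega>] xs ys by (auto simp: saw_def)
  then obtain zs where zs: "walkp zs" "distinct zs" "hd zs = u" "last zs = w"
    "ptime \<omega> zs \<le> ptime \<omega> xs + ptime \<omega> ys"
    using loop_erase[of "xs @ tl ys" \<omega>] by auto
  have "saw u w zs" using zs by (auto simp: saw_def)
  then show ?thesis using Tv_lower[of u w zs \<omega>] zs(5) xs ys by linarith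
qed

lemma Tv_lip: "Tv \<omega> u w \<le> Tv \<omega> u v + real_of_int (dist1 v w)"
  using Tv_triangle[of \<omega> u w v] Tv_le_dist1[of \<omega> v w] by linarith



abbreviation PB :: "real \<Rightarrow> ('n::finite) config measure" where
  "PB p \<equiv> PiM lattice_edges (\<lambda>_. measure_pmf (bernoulli_pmf p))"

lemma FPP_eq: "FPP p = PB p" unfolding FPP_def ..

lemma prob_PB: "prob_space (PB p)"
  by (rule prob_space_PiM) (simp add: prob_space_measure_pmf)

lemma adj_edge: "adj a b \<Longrightarrow> {a, b} \<in> lattice_edges"
  unfolding lattice_edges_def by blast

lemma comp_meas[measurable]:
  "e \<in> lattice_edges \<Longrightarrow> (\<lambda>\<omega>. \<omega> e) \<in> measurable (PiM lattice_edges (\<lambda>_. measure_pmf P)) (count_space UNIV)"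
  using measurable_component_singleton[of e lattice_edges "\<lambda>_. measure_pmf P"] by simp

lemma tval_meas:
  "e \<in> lattice_edges \<Longrightarrow> (\<lambda>\<omega>. tval \<omega> e) \<in> borel_measurable (PiM lattice_edges (\<lambda>_. measure_pmf P))"
  unfolding tval_def by measurable

lemma ptime_meas:
  "walkp vs \<Longrightarrow> (\<lambda>\<omega>. ptime \<omega> vs) \<in> borel_measurable (PiM lattice_edges (\<lambda>_. measure_pmf P))"
proof (induction vs rule: walkp.induct)
  case (3 a b r)
  then have "{a, b} \<in> lattice_edges" by (auto intro: adj_edge)
  with 3 show ?case using tval_meas[of "{a,b}" P] by simp
qed auto

lemma Tv_INF: "Tv \<omega> u v = (INF vs\<in>{vs. saw u v vs}. ptime \<omega> vs)"
  unfolding Tv_def ..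

lemma Tv_meas:
  "(\<lambda>\<omega>. Tv \<omega> u v) \<in> borel_measurable (PiM lattice_edges (\<lambda>_. measure_pmf P))"
  unfolding Tv_INF
  by (rule borel_measurable_cINF_real) (auto simp: saw_def intro: ptime_meas)

lemma Tv_integrable: "integrable (PB p) (\<lambda>\<omega>. Tv \<omega> u v)"
proof -
  interpret prob_space "PB p" by (rule prob_PB)
  show ?thesis
    by (rule integrable_const_bound[where B="real_of_int (dist1 u v)"])
       (auto simp: Tv_nonneg Tv_le_dist1 Tv_meas)
qed



definition tr :: "'n::finite vertex \<Rightarrow> 'n edge \<Rightarrow> 'n edge" where
  "tr a e = (\<lambda>x. x + a) ` e"

definition shift :: "'n::finite vertex \<Rightarrow> 'n config \<Rightarrow> 'n config" where
  "shift a \<omega> = (\<lambda>e\<in>lattice_edges. \<omega> (tr a e))"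

lemma adj_tr[simp]: "adj (x + a) (y + a) = adj x y"
  unfolding adj_def by simp

lemma tr_pair[simp]: "tr a {x, y} = {x + a, y + a}"
  unfolding tr_def by simp

lemma tr_edges: "e \<in> lattice_edges \<Longrightarrow> tr a e \<in> lattice_edges"
  unfolding lattice_edges_def using adj_tr by fastforce

lemma tr_inv: "tr (- a) (tr a e) = e"
  unfolding tr_def by (simp add: image_image)

lemma inj_tr: "inj_on (tr a) X"
  by (metis inj_on_inverseI tr_inv)

lemma ptime_shift: "walkp vs \<Longrightarrow> ptime (shift a \<omega>) vs = ptime \<omega> (map (\<lambda>x. x + a) vs)"
proof (induction vs rule: walkp.induct)
  case (3 x y r)
  then have "{x, y} \<in> lattice_edges" by (auto intro: adj_edge)
  then have "tval (shift a \<omega>) {x, y} = tval \<omega> {x + a, y + a}"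
    unfolding shift_def tval_def by simp
  with 3 show ?case by simp
qed auto

lemma walkp_map: "walkp (map (\<lambda>x. x + a) vs) = walkp vs"
  by (induction vs rule: walkp.induct) auto

lemma saw_map: "saw u v vs \<Longrightarrow> saw (u + a) (v + a) (map (\<lambda>x. x + a) vs)"
  unfolding saw_def by (auto simp: walkp_map hd_map last_map distinct_map inj_on_def)

lemma saw_image: "(map (\<lambda>x. x + a)) ` {vs. saw u v vs} = {ws. saw (u + a) (v + a) ws}"
proof (intro set_eqI iffI)
  fix ws assume "ws \<in> {ws. saw (u + a) (v + a) ws}"
  then have "saw u v (map (\<lambda>x. x - a) ws)"
    using saw_map[of "u + a" "v + a" ws "- a"] by simp
  moreover have "map (\<lambda>x. x + a) (map (\<lambda>x. x - a) ws) = ws" by (simp add: comp_def)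
  ultimately show "ws \<in> (map (\<lambda>x. x + a)) ` {vs. saw u v vs}" by (metis (mono_tags) image_eqI mem_Collect_eq)
qed (auto intro: saw_map)

lemma Tv_shift: "Tv (shift a \<omega>) u v = Tv \<omega> (u + a) (v + a)"
proof -
  have "Tv (shift a \<omega>) u v = (INF vs\<in>{vs. saw u v vs}. ptime \<omega> (map (\<lambda>x. x + a) vs))"
    unfolding Tv_INF by (intro INF_cong refl) (auto simp: saw_def ptime_shift)
  also have "\<dots> = (INF ws\<in>(map (\<lambda>x. x + a)) ` {vs. saw u v vs}. ptime \<omega> ws)"
    by (simp add: image_comp)
  also have "\<dots> = Tv \<omega> (u + a) (v + a)" unfolding saw_image Tv_INF ..
  finally show ?thesis .
qed

lemma shift_meas[measurable]: "shift a \<in> measurable (PB p) (PB p :: 'n::finite config measure)"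
  unfolding shift_def
proof (rule measurable_restrict)
  fix e :: "'n edge" assume "e \<in> lattice_edges"
  then have "tr a e \<in> lattice_edges" by (rule tr_edges)
  from comp_meas[OF this] show "(\<lambda>\<omega>. \<omega> (tr a e)) \<in> measurable (PB p) (measure_pmf (bernoulli_pmf p))"
    by simp
qed

lemma distr_shift: "distr (PB p) (PB p) (shift a) = (PB p :: 'n::finite config measure)"
  using distr_PiM_reindex[of "lattice_edges :: 'n edge set" "\<lambda>_. measure_pmf (bernoulli_pmf p)" "tr a" "lattice_edges"]
  unfolding shift_def by (simp add: prob_space_measure_pmf inj_tr tr_edges Pi_iff)

lemma E_shift: "(\<integral>\<omega>. Tv \<omega> (u + a) (v + a) \<partial>PB p) = (\<integral>\<omega>. Tv \<omega> u v \<partial>(PB p :: 'n::finite config measure))"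
proof -
  have "(\<integral>\<omega>. Tv \<omega> u v \<partial>(PB p :: 'n config measure)) = (\<integral>\<omega>. Tv \<omega> u v \<partial>distr (PB p) (PB p) (shift a))"
    by (simp add: distr_shift)
  also have "\<dots> = (\<integral>\<omega>. Tv (shift a \<omega>) u v \<partial>PB p)"
    by (rule integral_distr) (auto simp: Tv_meas)
  finally show ?thesis by (simp add: Tv_shift)
qed



abbreviation BB :: "real \<Rightarrow> bool measure" where
  "BB s \<equiv> measure_pmf (bernoulli_pmf s)"

lemma bern_emeasure:
  assumes "0 \<le> s" "s \<le> 1"
  shows "emeasure (BB s) F = ennreal ((if True \<in> F then s else 0) + (if False \<in> F then 1 - s else 0))"
proof -
  have "emeasure (BB s) F = ennreal (\<Sum>x\<in>F. pmf (bernoulli_pmf s) x)"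
    by (simp add: emeasure_measure_pmf_finite)
  also have "(\<Sum>x\<in>F. pmf (bernoulli_pmf s) x) = (if True \<in> F then s else 0) + (if False \<in> F then 1 - s else 0)"
  proof (cases "True \<in> F"; cases "False \<in> F")
    assume "True \<in> F" "False \<in> F" then have "F = {True, False}" apply (intro set_eqI) apply (case_tac x) by auto
    then show ?thesis using assms by simp
  next
    assume "True \<in> F" "False \<notin> F" then have "F = {True}" apply (intro set_eqI) apply (case_tac x) by auto
    then show ?thesis using assms by simp
  next
    assume "True \<notin> F" "False \<in> F" then have "F = {False}" apply (intro set_eqI) apply (case_tac x) by auto
    then show ?thesis using assms by simp
  next
    assume "True \<notin> F" "False \<notin> F" then have "F = {}" apply (intro set_eqI) apply (case_tac x) by auto
    then show ?thesis using assms by simp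
  qed
  finally show ?thesis .
qed

lemma nn_integral_BB:
  assumes "0 \<le> s" "s \<le> 1"
  shows "(\<integral>\<^sup>+x. f x \<partial>BB s) = ennreal s * f True + ennreal (1 - s) * f False"
  using assms by (simp add: nn_integral_measure_pmf nn_integral_count_space_finite UNIV_bool)

lemma scalar_coupling:
  assumes p: "0 \<le> p" "p \<le> 1" and r: "0 \<le> r" "r \<le> 1" and q: "q = p + (1 - p) * r"
  shows "(\<integral>\<^sup>+x. emeasure (BB r) {y. (x \<or> y) \<in> F} \<partial>BB p) = emeasure (BB q) F"
proof -
  have q01: "0 \<le> q" "q \<le> 1" using p r q by (auto intro: mult_nonneg_nonneg)
    (smt (verit) mult_left_le mult_nonneg_nonneg)
  have t: "{y. (True \<or> y) \<in> F} = (if True \<in> F then UNIV else {})" by auto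
  have f: "{y. (False \<or> y) \<in> F} = F" by auto
  have e1: "emeasure (BB r) (if True \<in> F then UNIV else {}) = ennreal (if True \<in> F then 1 else 0)"
    by (simp add: measure_pmf.emeasure_space_1)
  have key: "ennreal a * ennreal b + ennreal c * ennreal d = ennreal (a * b + c * d)"
    if "0 \<le> a" "0 \<le> b" "0 \<le> c" "0 \<le> d" for a b c d :: real
    using that by (simp add: ennreal_mult[symmetric] ennreal_plus[symmetric] del: ennreal_plus)
  have "(\<integral>\<^sup>+x. emeasure (BB r) {y. (x \<or> y) \<in> F} \<partial>BB p) =
    ennreal (p * (if True \<in> F then 1 else 0) + (1 - p) * ((if True \<in> F then r else 0) + (if False \<in> F then 1 - r else 0)))"
    unfolding nn_integral_BB[OF p] t f unfolding e1 unfolding bern_emeasure[OF r]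
    by (rule key) (use p r in auto)
  also have "\<dots> = emeasure (BB q) F"
    unfolding bern_emeasure[OF q01] using q by (intro arg_cong[where f=ennreal]) (auto simp: algebra_simps)
  finally show ?thesis .
qed



definition orm :: "('n::finite config \<times> 'n config) \<Rightarrow> 'n config" where
  "orm z = (\<lambda>e\<in>lattice_edges. fst z e \<or> snd z e)"

lemma orm_meas: "orm \<in> measurable (PB p \<Otimes>\<^sub>M PB r) (PB q :: 'n::finite config measure)"
  unfolding orm_def
proof (rule measurable_restrict)
  fix e :: "'n edge" assume e: "e \<in> lattice_edges"
  have "(\<lambda>z. fst z e) \<in> measurable (PB p \<Otimes>\<^sub>M PB r) (count_space UNIV)"
    by (rule measurable_compose[OF measurable_fst comp_meas[OF e]])
  then have [measurable]: "Measurable.pred (PB p \<Otimes>\<^sub>M PB r) (\<lambda>z. fst z e)"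
    unfolding pred_def by simp
  have "(\<lambda>z. snd z e) \<in> measurable (PB p \<Otimes>\<^sub>M PB r) (count_space UNIV)"
    by (rule measurable_compose[OF measurable_snd comp_meas[OF e]])
  then have [measurable]: "Measurable.pred (PB p \<Otimes>\<^sub>M PB r) (\<lambda>z. snd z e)"
    unfolding pred_def by simp
  show "(\<lambda>z. fst z e \<or> snd z e) \<in> measurable (PB p \<Otimes>\<^sub>M PB r) (BB q)"
    by simp measurable
qed

lemma prod_integral_PB:
  assumes J: "finite J" "J \<subseteq> (lattice_edges :: 'n::finite edge set)"
  shows "(\<integral>\<^sup>+a. (\<Prod>j\<in>J. h j (a j)) \<partial>(PB p :: 'n config measure)) = (\<Prod>j\<in>J. \<integral>\<^sup>+x. h j x \<partial>BB p)"
proof -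
  interpret PP: product_prob_space "\<lambda>_::'n edge. BB p" J
    by (rule product_prob_spaceI) (simp add: prob_space_measure_pmf)
  have d: "distr (PB p) (PiM J (\<lambda>_. BB p)) (\<lambda>\<omega>. \<lambda>n\<in>J. \<omega> (id n)) = PiM J (\<lambda>_. BB p)"
    using distr_PiM_reindex[of "lattice_edges :: 'n edge set" "\<lambda>_. BB p" id J] J
    by (simp add: prob_space_measure_pmf subset_eq)
  have mr: "(\<lambda>\<omega>. \<lambda>n\<in>J. \<omega> (id n)) \<in> measurable (PB p :: 'n config measure) (PiM J (\<lambda>_. BB p))"
  proof (rule measurable_restrict)
    fix j assume "j \<in> J"
    then have "j \<in> lattice_edges" using J by auto
    from comp_meas[OF this] show "(\<lambda>\<omega>. \<omega> (id j)) \<in> measurable (PB p) (BB p)" by simp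
  qed
  have mf: "(\<lambda>\<omega>. \<Prod>j\<in>J. h j (\<omega> j)) \<in> borel_measurable (PiM J (\<lambda>_. BB p))"
  proof (rule borel_measurable_prod_ennreal)
    fix j assume "j \<in> J"
    from measurable_component_singleton[OF this, of "\<lambda>_. BB p"]
    show "(\<lambda>\<omega>. h j (\<omega> j)) \<in> borel_measurable (PiM J (\<lambda>_. BB p))"
      by (rule measurable_compose) simp
  qed
  have "(\<integral>\<^sup>+a. (\<Prod>j\<in>J. h j (a j)) \<partial>(PB p :: 'n config measure)) =
        (\<integral>\<^sup>+a. (\<Prod>j\<in>J. h j ((\<lambda>n\<in>J. a (id n)) j)) \<partial>(PB p :: 'n config measure))"
    by (intro nn_integral_cong prod.cong) auto
  also have "\<dots> = (\<integral>\<^sup>+\<omega>. (\<Prod>j\<in>J. h j (\<omega> j)) \<partial>distr (PB p) (PiM J (\<lambda>_. BB p)) (\<lambda>\<omega>. \<lambda>n\<in>J. \<omega> (id n)))"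
    by (rule nn_integral_distr[symmetric, OF mr]) (use mf in simp)
  also have "\<dots> = (\<integral>\<^sup>+\<omega>. (\<Prod>j\<in>J. h j (\<omega> j)) \<partial>PiM J (\<lambda>_. BB p))" unfolding d ..
  also have "\<dots> = (\<Prod>j\<in>J. \<integral>\<^sup>+x. h j x \<partial>BB p)"
    by (rule PP.product_nn_integral_prod) (auto simp: J)
  finally show ?thesis .
qed

lemma distr_or:
  assumes p: "0 \<le> p" "p \<le> 1" and r: "0 \<le> r" "r \<le> 1" and q: "q = p + (1 - p) * r"
  shows "distr (PB p \<Otimes>\<^sub>M PB r) (PB q) orm = (PB q :: 'n::finite config measure)"
proof -
  interpret Q: product_prob_space "\<lambda>_::'n edge. BB q" "lattice_edges"
    by (rule product_prob_spaceI) (simp add: prob_space_measure_pmf)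
  interpret R: prob_space "PB r :: 'n config measure" by (rule prob_PB)
  interpret P: prob_space "PB p :: 'n config measure" by (rule prob_PB)
  interpret PR: pair_prob_space "PB p :: 'n config measure" "PB r :: 'n config measure"
    by (simp add: pair_prob_space_def pair_sigma_finite_def P.prob_space_axioms R.prob_space_axioms
        P.sigma_finite_measure_axioms R.sigma_finite_measure_axioms)
  show ?thesis
  proof (rule Q.PiM_eq)
    show "sets (distr (PB p \<Otimes>\<^sub>M PB r) (PB q) orm) = sets (PB q :: 'n config measure)" by simp
    fix J :: "'n edge set" and F assume J: "finite J" "J \<subseteq> lattice_edges"
      and F: "\<And>j. j \<in> J \<Longrightarrow> F j \<in> sets (BB q)"
    let ?X = "prod_emb lattice_edges (\<lambda>_. BB q) J (Pi\<^sub>E J F)"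
    have X: "?X \<in> sets (PB q)" by (rule sets_PiM_I) (use J in auto)
    have "emeasure (distr (PB p \<Otimes>\<^sub>M PB r) (PB q) orm) ?X =
          emeasure (PB p \<Otimes>\<^sub>M PB r) (orm -` ?X \<inter> space (PB p \<Otimes>\<^sub>M PB r))"
      by (rule emeasure_distr[OF orm_meas X])
    also have "\<dots> = (\<integral>\<^sup>+a. emeasure (PB r) (Pair a -` (orm -` ?X \<inter> space (PB p \<Otimes>\<^sub>M PB r))) \<partial>PB p)"
      by (rule R.emeasure_pair_measure_alt) (rule measurable_sets[OF orm_meas X])
    also have "\<dots> = (\<integral>\<^sup>+a. (\<Prod>j\<in>J. emeasure (BB r) {y. (a j \<or> y) \<in> F j}) \<partial>PB p)"
    proof (rule nn_integral_cong)
      fix a assume a: "a \<in> space (PB p :: 'n config measure)"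
      have "Pair a -` (orm -` ?X \<inter> space (PB p \<Otimes>\<^sub>M PB r)) =
            prod_emb lattice_edges (\<lambda>_. BB r) J (Pi\<^sub>E J (\<lambda>j. {y. (a j \<or> y) \<in> F j}))"
        using a J unfolding prod_emb_def orm_def
        by (auto simp: space_pair_measure space_PiM PiE_iff extensional_def subset_eq)
      then show "emeasure (PB r) (Pair a -` (orm -` ?X \<inter> space (PB p \<Otimes>\<^sub>M PB r))) =
          (\<Prod>j\<in>J. emeasure (BB r) {y. (a j \<or> y) \<in> F j})"
        using J by (simp add: emeasure_PiM_emb prob_space_measure_pmf)
    qed
    also have "\<dots> = (\<Prod>j\<in>J. \<integral>\<^sup>+x. emeasure (BB r) {y. (x \<or> y) \<in> F j} \<partial>BB p)"
      by (rule prod_integral_PB[OF J])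
    also have "\<dots> = (\<Prod>j\<in>J. emeasure (BB q) (F j))"
      by (intro prod.cong refl scalar_coupling[OF p r q])
    finally show "emeasure (distr (PB p \<Otimes>\<^sub>M PB r) (PB q) orm) ?X = (\<Prod>j\<in>J. emeasure (BB q) (F j))" .
  qed
qed



lemma integrable_bdd:
  assumes "prob_space M" "f \<in> borel_measurable M" "\<And>x. 0 \<le> f x" "\<And>x. f x \<le> (B::real)"
  shows "integrable M f"
proof -
  interpret prob_space M by fact
  show ?thesis
    by (rule integrable_const_bound[where B=B]) (use assms in auto)
qed

lemma orm_Pair_meas: "(\<lambda>b. orm (a, b)) \<in> measurable (PB r) (PB q :: 'n::finite config measure)"
  unfolding orm_def
proof (rule measurable_restrict)
  fix e :: "'n edge" assume e: "e \<in> lattice_edges"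
  have "(\<lambda>b. b e) \<in> measurable (PB r) (count_space UNIV)" by (rule comp_meas[OF e])
  then have [measurable]: "Measurable.pred (PB r) (\<lambda>b. b e)" unfolding pred_def by simp
  show "(\<lambda>b. fst (a, b) e \<or> snd (a, b) e) \<in> measurable (PB r) (BB q)"
    by simp measurable
qed

lemma tval_exp:
  assumes e: "e \<in> (lattice_edges :: 'n::finite edge set)" and r: "0 \<le> r" "r \<le> 1"
  shows "(\<integral>b. tval b e \<partial>(PB r :: 'n config measure)) = 1 - r"
proof -
  let ?f = "\<lambda>x::bool. if x then 0 else (1::real)"
  have "(\<integral>b. tval b e \<partial>(PB r :: 'n config measure)) = (\<integral>b. ?f (b e) \<partial>(PB r :: 'n config measure))"
    unfolding tval_def ..
  also have "\<dots> = (\<integral>x. ?f x \<partial>distr (PB r :: 'n config measure) (BB r) (\<lambda>b. b e))"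
    by (rule integral_distr[symmetric]) (use comp_meas[OF e] in simp_all)
  also have "distr (PB r :: 'n config measure) (BB r) (\<lambda>b. b e) = BB r"
    by (rule distr_PiM_component[OF _ e]) (simp add: prob_space_measure_pmf)
  also have "(\<integral>x. ?f x \<partial>BB r) = (\<Sum>a\<in>UNIV. ?f a * pmf (bernoulli_pmf r) a)"
    by (rule integral_measure_pmf_real) auto
  also have "\<dots> = 1 - r" using r by (simp add: UNIV_bool)
  finally show ?thesis .
qed

lemma E_ptime_orm:
  assumes r: "0 \<le> r" "r \<le> 1"
  shows "walkp vs \<Longrightarrow> (\<integral>b. ptime (orm (a, b)) vs \<partial>(PB r :: 'n::finite config measure)) = (1 - r) * ptime a vs"
proof (induction vs rule: walkp.induct)
  case (3 x y rest)
  let ?e = "{x, y}"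
  have e: "?e \<in> lattice_edges" using 3 by (auto intro: adj_edge)
  have tv: "tval (orm (a, b)) ?e = (if a ?e then 0 else tval b ?e)" for b
    using e unfolding orm_def tval_def by auto
  have m1: "(\<lambda>b. tval b ?e) \<in> borel_measurable (PB r :: 'n config measure)" by (rule tval_meas[OF e])
  have i1: "integrable (PB r :: 'n config measure) (\<lambda>b. if a ?e then 0 else tval b ?e)"
  proof (rule integrable_bdd[where B=1])
    show "(\<lambda>b. if a ?e then 0 else tval b ?e) \<in> borel_measurable (PB r :: 'n config measure)"
      using m1 by (cases "a ?e") simp_all
  qed (auto simp: tval_def prob_PB)
  have m2: "(\<lambda>b. ptime (orm (a, b)) (y # rest)) \<in> borel_measurable (PB r :: 'n config measure)"
    by (rule measurable_compose[OF orm_Pair_meas ptime_meas]) (use 3 in simp)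
  have i2: "integrable (PB r :: 'n config measure) (\<lambda>b. ptime (orm (a, b)) (y # rest))"
    by (rule integrable_bdd[where B="real (length (y # rest) - 1)"])
       (use m2 prob_PB ptime_nonneg ptime_le_len[of _ "y # rest"] in auto)
  have "(\<integral>b. ptime (orm (a, b)) (x # y # rest) \<partial>(PB r :: 'n config measure)) =
        (\<integral>b. (if a ?e then 0 else tval b ?e) + ptime (orm (a, b)) (y # rest) \<partial>(PB r :: 'n config measure))"
    by (simp add: tv)
  also have "\<dots> = (\<integral>b. (if a ?e then 0 else tval b ?e) \<partial>(PB r :: 'n config measure)) +
       (\<integral>b. ptime (orm (a, b)) (y # rest) \<partial>(PB r :: 'n config measure))"
    by (rule Bochner_Integration.integral_add[OF i1 i2])
  also have "(\<integral>b. (if a ?e then 0 else tval b ?e) \<partial>(PB r :: 'n config measure)) = (1 - r) * tval a ?e"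
    using tval_exp[OF e r] by (simp add: tval_def)
  finally show ?case using 3 by (simp add: algebra_simps)
qed auto

lemma E_coupling:
  assumes p: "0 \<le> p" "p \<le> 1" and r: "0 \<le> r" "r \<le> 1" and q: "q = p + (1 - p) * r"
  shows "(\<integral>\<omega>. Tv \<omega> u v \<partial>(PB q :: 'n::finite config measure)) \<le> (1 - r) * (\<integral>\<omega>. Tv \<omega> u v \<partial>(PB p :: 'n config measure))"
proof -
  interpret R: prob_space "PB r :: 'n config measure" by (rule prob_PB)
  interpret P: prob_space "PB p :: 'n config measure" by (rule prob_PB)
  interpret PR: pair_prob_space "PB p :: 'n config measure" "PB r :: 'n config measure"
    by (simp add: pair_prob_space_def pair_sigma_finite_def P.prob_space_axioms R.prob_space_axioms
        P.sigma_finite_measure_axioms R.sigma_finite_measure_axioms)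
  have mz: "(\<lambda>z. Tv (orm z) u v) \<in> borel_measurable (PB p \<Otimes>\<^sub>M (PB r :: 'n config measure))"
    by (rule measurable_compose[OF orm_meas Tv_meas])
  have iz: "integrable (PB p \<Otimes>\<^sub>M (PB r :: 'n config measure)) (\<lambda>z. Tv (orm z) u v)"
    by (rule integrable_bdd[where B="real_of_int (dist1 u v)"])
       (use mz PR.prob_space_axioms Tv_nonneg Tv_le_dist1 in auto)
  have "(\<integral>\<omega>. Tv \<omega> u v \<partial>(PB q :: 'n config measure)) =
        (\<integral>\<omega>. Tv \<omega> u v \<partial>distr (PB p \<Otimes>\<^sub>M PB r) (PB q :: 'n config measure) orm)"
    by (simp add: distr_or[OF p r q])
  also have "\<dots> = (\<integral>z. Tv (orm z) u v \<partial>(PB p \<Otimes>\<^sub>M (PB r :: 'n config measure)))"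
    by (rule integral_distr[OF orm_meas Tv_meas])
  also have "\<dots> = (\<integral>a. (\<integral>b. Tv (orm (a, b)) u v \<partial>(PB r :: 'n config measure)) \<partial>(PB p :: 'n config measure))"
    by (rule PR.integral_fst'[OF iz, symmetric])
  also have "\<dots> \<le> (\<integral>a. (1 - r) * Tv a u v \<partial>(PB p :: 'n config measure))"
  proof (rule integral_mono)
    show "integrable (PB p) (\<lambda>a. \<integral>b. Tv (orm (a, b)) u v \<partial>(PB r :: 'n config measure))"
      using PR.integrable_fst'[OF iz] by simp
    show "integrable (PB p :: 'n config measure) (\<lambda>a. (1 - r) * Tv a u v)"
      by (intro integrable_mult_right Tv_integrable)
    fix a :: "'n config"
    obtain vs where vs: "saw u v vs" "Tv a u v = ptime a vs" using Tv_attained by blast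
    have mb: "(\<lambda>b. Tv (orm (a, b)) u v) \<in> borel_measurable (PB r :: 'n config measure)"
      by (rule measurable_compose[OF orm_Pair_meas Tv_meas])
    have mb2: "(\<lambda>b. ptime (orm (a, b)) vs) \<in> borel_measurable (PB r :: 'n config measure)"
      by (rule measurable_compose[OF orm_Pair_meas ptime_meas]) (use vs in \<open>simp add: saw_def\<close>)
    have "(\<integral>b. Tv (orm (a, b)) u v \<partial>(PB r :: 'n config measure)) \<le> (\<integral>b. ptime (orm (a, b)) vs \<partial>(PB r :: 'n config measure))"
    proof (rule integral_mono)
      show "integrable (PB r :: 'n config measure) (\<lambda>b. Tv (orm (a, b)) u v)"
        by (rule integrable_bdd[where B="real_of_int (dist1 u v)"])
           (use mb prob_PB Tv_nonneg Tv_le_dist1 in auto)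
      show "integrable (PB r :: 'n config measure) (\<lambda>b. ptime (orm (a, b)) vs)"
        by (rule integrable_bdd[where B="real (length vs - 1)"])
           (use mb2 prob_PB ptime_nonneg ptime_le_len in auto)
      fix b show "Tv (orm (a, b)) u v \<le> ptime (orm (a, b)) vs" by (rule Tv_lower[OF vs(1)])
    qed
    also have "\<dots> = (1 - r) * Tv a u v"
      using E_ptime_orm[OF r, of vs a] vs by (simp add: saw_def)
    finally show "(\<integral>b. Tv (orm (a, b)) u v \<partial>(PB r :: 'n config measure)) \<le> (1 - r) * Tv a u v" .
  qed
  also have "\<dots> = (1 - r) * (\<integral>\<omega>. Tv \<omega> u v \<partial>(PB p :: 'n config measure))" by simp
  finally show ?thesis .
qed



lemma fekete_iter:
  fixes b :: "nat \<Rightarrow> real"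
  assumes sub: "\<And>m n. b (m + n) \<le> b m + b n"
  shows "b (q * k + s) \<le> real q * b k + b s"
proof (induction q)
  case (Suc q)
  have "b (Suc q * k + s) = b (k + (q * k + s))" by (simp add: algebra_simps)
  also have "\<dots> \<le> b k + b (q * k + s)" by (rule sub)
  finally show ?case using Suc by (simp add: algebra_simps)
qed simp

lemma fekete:
  fixes b :: "nat \<Rightarrow> real"
  assumes sub: "\<And>m n. b (m + n) \<le> b m + b n" and nn: "\<And>n. 0 \<le> b n"
  shows "(\<lambda>n. b n / real n) \<longlonglongrightarrow> (INF n\<in>{1..}. b n / real n)"
proof (rule order_tendstoI)
  let ?L = "INF n\<in>{1..}. b n / real n"
  have bdd: "bdd_below ((\<lambda>n. b n / real n) ` {1..})"
    by (rule bdd_belowI[of _ 0]) (use nn in auto)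
  fix y assume "y < ?L"
  show "eventually (\<lambda>n. y < b n / real n) sequentially"
  proof (rule eventually_sequentiallyI[of 1])
    fix n :: nat assume "1 \<le> n"
    then have "?L \<le> b n / real n" by (intro cINF_lower bdd) auto
    then show "y < b n / real n" using \<open>y < ?L\<close> by linarith
  qed
next
  let ?L = "INF n\<in>{1..}. b n / real n"
  fix y assume "?L < y"
  have bdd: "bdd_below ((\<lambda>n. b n / real n) ` {1..})"
    by (rule bdd_belowI[of _ 0]) (use nn in auto)
  obtain k where k: "k \<in> {1..}" "b k / real k < y"
    using cINF_less_iff[OF _ bdd, of y] \<open>?L < y\<close> by blast
  define \<epsilon> where "\<epsilon> = y - b k / real k"
  have \<epsilon>: "0 < \<epsilon>" using k unfolding \<epsilon>_def by simp
  define M where "M = (\<Sum>s<k. b s)"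
  have M: "b s \<le> M" if "s < k" for s
    unfolding M_def using that nn by (intro member_le_sum) auto
  have M0: "0 \<le> M" unfolding M_def using nn by (simp add: sum_nonneg)
  define N where "N = nat \<lceil>M / \<epsilon>\<rceil> + 1"
  show "eventually (\<lambda>n. b n / real n < y) sequentially"
  proof (rule eventually_sequentiallyI[of N])
    fix n assume n: "N \<le> n"
    have npos: "0 < real n" using n unfolding N_def by simp
    have kpos: "0 < real k" using k by simp
    have "M / \<epsilon> < real n" using n unfolding N_def by linarith
    then have Mn: "M / real n < \<epsilon>" using npos \<epsilon> by (simp add: field_simps)
    have dec: "n = (n div k) * k + n mod k" by simp
    have "b n \<le> real (n div k) * b k + b (n mod k)"
      using fekete_iter[OF sub, of "n div k" k "n mod k"] dec by simp
    also have "\<dots> \<le> real (n div k) * b k + M" using M[of "n mod k"] k by simp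
    finally have bn: "b n \<le> real (n div k) * b k + M" .
    have "n div k * k \<le> n" by (rule div_times_less_eq_dividend)
    then have dk: "real (n div k) * real k \<le> real n"
      by (metis of_nat_le_iff of_nat_mult)
    have "real (n div k) * b k = (real (n div k) * real k) * (b k / real k)" using kpos by simp
    also have "\<dots> \<le> real n * (b k / real k)"
      by (rule mult_right_mono[OF dk]) (use nn[of k] kpos in simp)
    finally have "real (n div k) * b k \<le> real n * (b k / real k)" .
    then have "b n \<le> real n * (b k / real k) + M" using bn by linarith
    then have "b n / real n \<le> b k / real k + M / real n"
      using npos by (simp add: field_simps)
    then show "b n / real n < y" using Mn unfolding \<epsilon>_def by linarith
  qed
qed



definition ET :: "real \<Rightarrow> real ^ 'n::finite \<Rightarrow> nat \<Rightarrow> real" where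
  "ET p x n = (\<integral>\<omega>. Tv \<omega> 0 (lat (real n *\<^sub>R x)) \<partial>(PB p :: 'n config measure))"

lemma lat0: "lat (0 :: real ^ 'n::finite) = 0"
  unfolding lat_def by (simp add: vec_eq_iff)

lemma time_const_ET: "time_const p x = lim (\<lambda>n. ET p x n / real n)"
  unfolding time_const_def FPP_eq passage_time_Tv lat0 ET_def ..

lemma floor_sum_bound: "\<bar>\<lfloor>a\<rfloor> + \<lfloor>b\<rfloor> - \<lfloor>a + b\<rfloor>\<bar> \<le> (1::int)"
  by (simp add: floor_add)

lemma dist_lat:
  "dist1 (lat (real m *\<^sub>R x) + lat (real n *\<^sub>R x)) (lat (real (m + n) *\<^sub>R (x :: real ^ 'n::finite))) \<le> int CARD('n)"
proof -
  have "dist1 (lat (real m *\<^sub>R x) + lat (real n *\<^sub>R x)) (lat (real (m + n) *\<^sub>R x)) =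
        (\<Sum>i\<in>UNIV. \<bar>\<lfloor>real m * x $ i\<rfloor> + \<lfloor>real n * x $ i\<rfloor> - \<lfloor>real m * x $ i + real n * x $ i\<rfloor>\<bar>)"
    unfolding dist1_def lat_def by (simp add: algebra_simps)
  also have "\<dots> \<le> (\<Sum>i\<in>(UNIV :: 'n set). 1)" by (intro sum_mono floor_sum_bound)
  finally show ?thesis by simp
qed

lemma ET_nonneg: "0 \<le> ET p x n"
  unfolding ET_def by (intro integral_nonneg_AE) (simp add: Tv_nonneg)

lemma ET_sub:
  fixes x :: "real ^ 'n::finite"
  shows "ET p x (m + n) \<le> ET p x m + ET p x n + real CARD('n)"
proof -
  let ?L = "\<lambda>k. lat (real k *\<^sub>R x)"
  let ?M = "PB p :: 'n config measure"
  interpret prob_space ?M by (rule prob_PB)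
  have pw: "Tv \<omega> 0 (?L (m + n)) \<le> (Tv \<omega> 0 (?L m) + Tv \<omega> (?L m) (?L n + ?L m)) + real CARD('n)" for \<omega>
  proof -
    have "Tv \<omega> 0 (?L (m + n)) \<le> Tv \<omega> 0 (?L m) + Tv \<omega> (?L m) (?L (m + n))" by (rule Tv_triangle)
    moreover have "Tv \<omega> (?L m) (?L (m + n)) \<le> Tv \<omega> (?L m) (?L m + ?L n) + real_of_int (dist1 (?L m + ?L n) (?L (m + n)))"
      by (rule Tv_lip)
    moreover have "real_of_int (dist1 (?L m + ?L n) (?L (m + n))) \<le> real CARD('n)"
      using dist_lat[of m x n] by linarith
    ultimately show ?thesis by (simp add: add.commute)
  qed
  have i1: "integrable ?M (\<lambda>\<omega>. Tv \<omega> 0 (?L m))" by (rule Tv_integrable)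
  have i2: "integrable ?M (\<lambda>\<omega>. Tv \<omega> (?L m) (?L n + ?L m))" by (rule Tv_integrable)
  have "ET p x (m + n) \<le> (\<integral>\<omega>. (Tv \<omega> 0 (?L m) + Tv \<omega> (?L m) (?L n + ?L m)) + real CARD('n) \<partial>?M)"
    unfolding ET_def
    by (rule integral_mono) (use pw Tv_integrable i1 i2 in auto)
  also have "\<dots> = (\<integral>\<omega>. Tv \<omega> 0 (?L m) \<partial>?M) + (\<integral>\<omega>. Tv \<omega> (?L m) (?L n + ?L m) \<partial>?M) + real CARD('n)"
    using i1 i2 by (simp add: Bochner_Integration.integral_add prob_space)
  also have "(\<integral>\<omega>. Tv \<omega> (?L m) (?L n + ?L m) \<partial>?M) = ET p x n"
    unfolding ET_def using E_shift[where u=0 and a="?L m" and v="?L n" and p=p] by simp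
  finally show ?thesis unfolding ET_def by simp
qed

lemma ET_lim: "(\<lambda>n. ET p x n / real n) \<longlonglongrightarrow> time_const p (x :: real ^ 'n::finite)"
proof -
  define C where "C = real CARD('n)"
  define b where "b n = ET p x n + C" for n
  have "(\<lambda>n. b n / real n) \<longlonglongrightarrow> (INF n\<in>{1..}. b n / real n)"
  proof (rule fekete)
    show "b (m + n) \<le> b m + b n" for m n using ET_sub[of p x m n] unfolding b_def C_def by simp
    show "0 \<le> b n" for n using ET_nonneg[of p x n] unfolding b_def C_def by simp
  qed
  then have "(\<lambda>n. b n / real n - C / real n) \<longlonglongrightarrow> (INF n\<in>{1..}. b n / real n) - 0"
    by (intro tendsto_diff lim_const_over_n)
  moreover have "(\<lambda>n. b n / real n - C / real n) = (\<lambda>n. ET p x n / real n)"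
    by (rule ext) (simp add: b_def diff_divide_distrib[symmetric])
  ultimately have lim: "(\<lambda>n. ET p x n / real n) \<longlonglongrightarrow> (INF n\<in>{1..}. b n / real n)" by simp
  then have "time_const p x = (INF n\<in>{1..}. b n / real n)"
    unfolding time_const_ET by (rule limI)
  with lim show ?thesis by simp
qed



lemma bern_ge1: "1 \<le> q \<Longrightarrow> bernoulli_pmf q = bernoulli_pmf 1"
  by (rule pmf_eqI) (simp add: bernoulli_pmf.rep_eq)

theorem theorem1:
  fixes x :: "real ^ 'n::finite" and p q :: real
  assumes "CARD('n) \<ge> 2"
    and "0 \<le> p" and "p < q" and "q < p_crit TYPE('n)"
  shows "time_const p x - time_const q x \<ge> time_const q x / (1 - q) * (q - p)"
proof -
  let ?mp = "time_const p x" and ?mq = "time_const q x"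
  have Lp: "(\<lambda>n. ET p x n / real n) \<longlonglongrightarrow> ?mp" by (rule ET_lim)
  have Lq: "(\<lambda>n. ET q x n / real n) \<longlonglongrightarrow> ?mq" by (rule ET_lim)
  have mp0: "0 \<le> ?mp"
    by (rule tendsto_lowerbound[OF Lp]) (auto intro!: always_eventually divide_nonneg_nonneg ET_nonneg)
  show ?thesis
  proof (cases "1 \<le> q")
    case True
    have "ET q x n = 0" for n
    proof -
      have "ET q x n = ET 1 x n" unfolding ET_def bern_ge1[OF True] ..
      also have "\<dots> \<le> (1 - 1) * ET 0 x n"
        unfolding ET_def by (rule E_coupling) auto
      finally show ?thesis using ET_nonneg[of q x n] by simp
    qed
    then have "(\<lambda>n. 0) \<longlonglongrightarrow> ?mq" using Lq by simp
    then have "?mq = 0" using LIMSEQ_unique tendsto_const by blast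
    then show ?thesis using mp0 by simp
  next
    case False
    then have q1: "q < 1" by simp
    have p1: "p < 1" using q1 assms by simp
    define r where "r = (q - p) / (1 - p)"
    have r: "0 \<le> r" "r \<le> 1" using assms p1 q1 unfolding r_def by (auto simp: field_simps)
    have qr: "q = p + (1 - p) * r" using p1 unfolding r_def by (simp add: field_simps)
    have ineq: "ET q x n / real n \<le> (1 - r) * (ET p x n / real n)" for n
    proof -
      have "ET q x n \<le> (1 - r) * ET p x n"
        unfolding ET_def by (rule E_coupling[OF _ _ r qr]) (use assms p1 in auto)
      then show ?thesis by (simp add: divide_right_mono)
    qed
    have "?mq \<le> (1 - r) * ?mp"
      by (rule LIMSEQ_le[OF Lq tendsto_mult_left[OF Lp]]) (use ineq in auto)
    moreover have "1 - r = (1 - q) / (1 - p)" using p1 unfolding r_def by (simp add: field_simps)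
    ultimately have "?mq \<le> (1 - q) / (1 - p) * ?mp" by simp
    then have h: "?mq * (1 - p) \<le> ?mp * (1 - q)" using p1 by (simp add: field_simps)
    have "?mq / (1 - q) * (q - p) + ?mq = ?mq * (1 - p) / (1 - q)" using q1 by (simp add: field_simps)
    also have "\<dots> \<le> ?mp" using h q1 by (simp add: field_simps)
    finally show ?thesis by simp
  qed
qed

end
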